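(* Let $\Delta$ be a finite, flag, simply connected simplicial complex, and let $H_\Delta$, $q$, $T$, $p_n$, $p$ and $\theta$ be as described in the context. For all $e\in\mathrm{Edge}(\Delta)$ and $n\in\mathbb{Z}$ the following equalities hold in $H_\Delta$: (i) $\theta(e)=p(q,\iota e)\,e\,p(q,\iota e)^{-1}=p(q,\iota e)\,e^2\,p(\tau e,q)=p(q,\iota e)\,e^2\,p(q,\tau e)^{-1}$; (ii) $\theta(e^n)=p(q,\iota e)\,e^n\,p(\iota e,q)=p(q,\iota e)\,e^{n+1}\,p(\tau e,q)=p(q,\iota e)\,e^{n+1}\,p(q,\tau e)^{-1}$; (iii) if $e_1\cdot\ldots\cdot e_l$ is a combinatorial path then $\theta(e_1^n\cdots e_l^n)=p(q,\iota e_1)\,e_1^{n+1}\cdots e_l^{n+1}\,p(\tau e_l,q)$; (iv) $\theta^{-1}(e)=p_{-1}(q,\iota e)\,p_{-1}(\tau e,q)=p_{-1}(q,\iota e)\,e\,p_{-1}(\iota e,q)=p_{-1}(q,\iota e)\,e\,p_{-1}(q,\iota e)^{-1}$; (v) $\theta^{-1}(e^n)=p_{-1}(q,\iota e)\,e^n\,p_{-1}(\iota e,q)=p_{-1}(q,\iota e)\,e^{n-1}\,p_{-1}(\tau e,q)=p_{-1}(q,\iota e)\,e^{n-1}\,p_{-1}(q,\tau e)^{-1}$; (vi) if $e_1\cdot\ldots\cdot e_l$ is a combinatorial path then $\theta^{-1}(e_1^n\cdots e_l^n)=p_{-1}(q,\iota e_1)\,e_1^{n-1}\cdots e_l^{n-1}\,p_{-1}(\tau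 e_l,q)$; (vii) for all $k\in\mathbb{Z}$, $\theta^k(e)=p_k(q,\iota e)\,e^{k+1}\,p_k(\tau e,q)$.
   Context: $\mathrm{Edge}(\Delta)$ is the set of directed edges of $\Delta$ (each 1-simplex gives two); for $e\in\mathrm{Edge}(\Delta)$, $\iota e$ and $\tau e$ are its initial and terminal vertices and $\overline{e}$ is $e$ with reversed orientation. Directed edges $e_1,\dots,e_l$ form a combinatorial path $e_1\cdot\ldots\cdot e_l$ if $\tau e_i=\iota e_{i+1}$ for all $i$, and a combinatorial 1-cycle if moreover $\tau e_l=\iota e_1$. The Bestvina–Brady group $H_\Delta$ (kernel of the map from the right-angled Artin group of $\Delta$ to $\mathbb{Z}$ sending every standard generator to a fixed generator) is presented by $\mathcal{P}_H=\langle \mathrm{Edge}(\Delta)\mid \mathcal{R}_H\rangle$, where $\mathcal{R}_H$ consists of the words $e\overline{e}$ for $e\in\mathrm{Edge}(\Delta)$ and the words $efg$ and $e^{-1}f^{-1}g^{-1}$ for every combinatorial 1-cycle $e\cdot f\cdot g$. Fix a vertex $q$ and a spanning tree $T$ of the 1-skeleton of $\Delta$. For $n\in\mathbb{Z}$ and vertices $u,v$, $p_n(u,v)$ denotes $e_1^n\cdots e_l^n$ where $e_1\cdot\ldots\cdot e_l$ is the unique geodesic combinatorial path in $T$ from $u$ to $v$, and $p(u,v)=p_1(u,v)$. For $e\in\mathrm{Edge}(\Delta)$ let $w_e=p(q,\iota e)\,e\,p(\iota e,q)$; it is known that $e\mapsto w_e$ defines an automorphism $\theta$ of $H_\Delta$.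 *)

theory Defs
  imports "HOL-Algebra.Algebra"
begin

text \<open>Directed edges are ordered pairs (u,v) with u, v distinct
  and {u,v} a 1-simplex; the initial vertex is fst, the terminal vertex is snd.\<close>

definition simplicial_complex :: "'v set set \<Rightarrow> bool" where
  "simplicial_complex \<Delta> \<longleftrightarrow> finite \<Delta> \<and> (\<forall>s\<in>\<Delta>. finite s \<and> s \<noteq> {}) \<and>
     (\<forall>s\<in>\<Delta>. \<forall>t. t \<subseteq> s \<and> t \<noteq> {} \<longrightarrow> t \<in> \<Delta>)"

definition vertices :: "'v set set \<Rightarrow> 'v set" where
  "vertices \<Delta> = \<Union>\<Delta>"

definition flag :: "'v set set \<Rightarrow> bool" where
  "flag \<Delta> \<longleftrightarrow> (\<forall>S. finite S \<and> S \<noteq> {} \<and> S \<subseteq> vertices \<Delta> \<and>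
      (\<forall>u\<in>S. \<forall>v\<in>S. u \<noteq> v \<longrightarrow> {u, v} \<in> \<Delta>) \<longrightarrow> S \<in> \<Delta>)"

definition one_skel :: "'v set set \<Rightarrow> 'v set set" where
  "one_skel \<Delta> = {s \<in> \<Delta>. card s = 2}"

definition edges :: "'v set set \<Rightarrow> ('v \<times> 'v) set" where
  "edges \<Delta> = {(u, v). u \<noteq> v \<and> {u, v} \<in> \<Delta>}"

definition rev_edge :: "'v \<times> 'v \<Rightarrow> 'v \<times> 'v" where
  "rev_edge e = (snd e, fst e)"

fun walk :: "'v set set \<Rightarrow> 'v \<Rightarrow> 'v \<Rightarrow> ('v \<times> 'v) list \<Rightarrow> bool" where
  "walk G u v [] = (u = v)"
| "walk G u v ((a, b) # es) = (a = u \<and> a \<noteq> b \<and> {a, b} \<in> G \<and> walk G b v es)"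

definition cpath :: "'v set set \<Rightarrow> ('v \<times> 'v) list \<Rightarrow> bool" where
  "cpath \<Delta> es \<longleftrightarrow> es \<noteq> [] \<and> set es \<subseteq> edges \<Delta> \<and>
     (\<forall>i. Suc i < length es \<longrightarrow> snd (es ! i) = fst (es ! Suc i))"

text \<open>Edge-path equivalence (homotopy of edge paths with fixed endpoints x, y):
  generated by cancelling a backtrack e . rev e and by replacing two sides of a
  2-simplex by the third side.\<close>

inductive ep_eq :: "'v set set \<Rightarrow> 'v \<Rightarrow> 'v \<Rightarrow> ('v \<times> 'v) list \<Rightarrow> ('v \<times> 'v) list \<Rightarrow> bool"
  for \<Delta> x y where
  ep_refl: "walk (one_skel \<Delta>) x y es \<Longrightarrow> ep_eq \<Delta> x y es es"
| ep_sym: "ep_eq \<Delta> x y es es' \<Longrightarrow> ep_eq \<Delta> x y es' es"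
| ep_trans: "ep_eq \<Delta> x y es es' \<Longrightarrow> ep_eq \<Delta> x y es' es'' \<Longrightarrow> ep_eq \<Delta> x y es es''"
| ep_back: "walk (one_skel \<Delta>) x y (u @ [e, rev_edge e] @ w) \<Longrightarrow>
     ep_eq \<Delta> x y (u @ [e, rev_edge e] @ w) (u @ w)"
| ep_tri: "walk (one_skel \<Delta>) x y (u @ [(a, b), (b, c)] @ w) \<Longrightarrow> {a, b, c} \<in> \<Delta> \<Longrightarrow>
     card {a, b, c} = 3 \<Longrightarrow> ep_eq \<Delta> x y (u @ [(a, b), (b, c)] @ w) (u @ [(a, c)] @ w)"

text \<open>Simply connected: nonempty, connected, and trivial edge-path group
  (which is isomorphic to the fundamental group of the geometric realisation).\<close>

definition simply_connected :: "'v set set \<Rightarrow> bool" where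
  "simply_connected \<Delta> \<longleftrightarrow> vertices \<Delta> \<noteq> {} \<and>
     (\<forall>u\<in>vertices \<Delta>. \<forall>v\<in>vertices \<Delta>. \<exists>es. walk (one_skel \<Delta>) u v es) \<and>
     (\<forall>x\<in>vertices \<Delta>. \<forall>es. walk (one_skel \<Delta>) x x es \<longrightarrow> ep_eq \<Delta> x x es [])"

definition spanning_tree :: "'v set set \<Rightarrow> 'v set set \<Rightarrow> bool" where
  "spanning_tree \<Delta> T \<longleftrightarrow> T \<subseteq> one_skel \<Delta> \<and>
     (\<forall>u\<in>vertices \<Delta>. \<forall>v\<in>vertices \<Delta>. \<exists>es. walk T u v es) \<and>
     (\<forall>s\<in>T. \<forall>a b. s = {a, b} \<longrightarrow> \<not> (\<exists>es. walk (T - {s}) a b es))"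

definition tree_path :: "'v set set \<Rightarrow> 'v \<Rightarrow> 'v \<Rightarrow> ('v \<times> 'v) list" where
  "tree_path T u v = (THE es. walk T u v es \<and> (\<forall>es'. walk T u v es' \<longrightarrow> length es \<le> length es'))"

type_synonym 'a word = "('a \<times> bool) list"

definition word_on :: "'a set \<Rightarrow> 'a word \<Rightarrow> bool" where
  "word_on S w \<longleftrightarrow> set (map fst w) \<subseteq> S"

text \<open>Equality in the group \<langle>S | R\<rangle>: the congruence on words over S generated by free
  cancellation and by deleting relators. (x, True) is x, (x, False) is x^-1.\<close>

inductive pres_eq :: "'a set \<Rightarrow> 'a word set \<Rightarrow> 'a word \<Rightarrow> 'a word \<Rightarrow> bool" for S R where
  pe_refl: "word_on S w \<Longrightarrow> pres_eq S R w w"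
| pe_sym: "pres_eq S R w w' \<Longrightarrow> pres_eq S R w' w"
| pe_trans: "pres_eq S R w w' \<Longrightarrow> pres_eq S R w' w'' \<Longrightarrow> pres_eq S R w w''"
| pe_cancel: "word_on S u \<Longrightarrow> word_on S v \<Longrightarrow> x \<in> S \<Longrightarrow>
     pres_eq S R (u @ [(x, b), (x, \<not> b)] @ v) (u @ v)"
| pe_rel: "word_on S u \<Longrightarrow> word_on S v \<Longrightarrow> r \<in> R \<Longrightarrow> word_on S r \<Longrightarrow>
     pres_eq S R (u @ r @ v) (u @ v)"

definition pres_class :: "'a set \<Rightarrow> 'a word set \<Rightarrow> 'a word \<Rightarrow> 'a word set" where
  "pres_class S R w = {v. pres_eq S R w v}"

definition presented_group :: "'a set \<Rightarrow> 'a word set \<Rightarrow> 'a word set monoid" where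
  "presented_group S R =
     \<lparr>carrier = pres_class S R ` {w. word_on S w},
      monoid.mult = (\<lambda>A B. pres_class S R ((SOME a. a \<in> A) @ (SOME b. b \<in> B))),
      one = pres_class S R []\<rparr>"

definition BB_rels :: "'v set set \<Rightarrow> ('v \<times> 'v) word set" where
  "BB_rels \<Delta> =
     {[(e, True), (rev_edge e, True)] | e. e \<in> edges \<Delta>} \<union>
     {[(e, True), (f, True), (g, True)] | e f g. e \<in> edges \<Delta> \<and> f \<in> edges \<Delta> \<and> g \<in> edges \<Delta> \<and>
        snd e = fst f \<and> snd f = fst g \<and> snd g = fst e} \<union>
     {[(e, False), (f, False), (g, False)] | e f g. e \<in> edges \<Delta> \<and> f \<in> edges \<Delta> \<and> g \<in> edges \<Delta> \<and>
        snd e = fst f \<and> snd f = fst g \<and> snd g = fst e}"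

definition BB_group :: "'v set set \<Rightarrow> ('v \<times> 'v) word set monoid" where
  "BB_group \<Delta> = presented_group (edges \<Delta>) (BB_rels \<Delta>)"

definition bbgen :: "'v set set \<Rightarrow> 'v \<times> 'v \<Rightarrow> ('v \<times> 'v) word set" where
  "bbgen \<Delta> e = pres_class (edges \<Delta>) (BB_rels \<Delta>) [(e, True)]"

definition path_pow :: "'v set set \<Rightarrow> int \<Rightarrow> ('v \<times> 'v) list \<Rightarrow> ('v \<times> 'v) word set" where
  "path_pow \<Delta> n es =
     foldr (\<lambda>e acc. (bbgen \<Delta> e [^]\<^bsub>BB_group \<Delta>\<^esub> n) \<otimes>\<^bsub>BB_group \<Delta>\<^esub> acc) es \<one>\<^bsub>BB_group \<Delta>\<^esub>"

definition tp :: "'v set set \<Rightarrow> 'v set set \<Rightarrow> int \<Rightarrow> 'v \<Rightarrow> 'v \<Rightarrow> ('v \<times> 'v) word set" where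
  "tp \<Delta> T n u v = path_pow \<Delta> n (tree_path T u v)"

definition aut_pow :: "('a, 'b) monoid_scheme \<Rightarrow> ('a \<Rightarrow> 'a) \<Rightarrow> int \<Rightarrow> 'a \<Rightarrow> 'a" where
  "aut_pow G f k = (if 0 \<le> k then f ^^ nat k else (inv_into (carrier G) f) ^^ nat (- k))"

end

theory Submission
  imports Defs
begin

lemma word_on_append[simp]: "word_on S (u @ v) \<longleftrightarrow> word_on S u \<and> word_on S v"
  by (auto simp: word_on_def)
lemma word_on_Nil[simp]: "word_on S []" by (simp add: word_on_def)
lemma word_on_Cons[simp]: "word_on S (x # v) \<longleftrightarrow> fst x \<in> S \<and> word_on S v"
  by (auto simp: word_on_def)

lemma pres_eq_words: "pres_eq S R w w' \<Longrightarrow> word_on S w \<and> word_on S w'"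
  by (induction rule: pres_eq.induct) auto

lemma pres_eq_left: "pres_eq S R w w' \<Longrightarrow> word_on S u \<Longrightarrow> pres_eq S R (u @ w) (u @ w')"
proof (induction rule: pres_eq.induct)
  case (pe_refl w) then show ?case by (simp add: pres_eq.pe_refl)
next
  case (pe_sym w w') then show ?case by (blast intro: pres_eq.pe_sym)
next
  case (pe_trans w w' w'') then show ?case by (blast intro: pres_eq.pe_trans)
next
  case (pe_cancel u' v x b)
  then show ?case using pres_eq.pe_cancel[of S "u @ u'" v x R b] by simp
next
  case (pe_rel u' v r)
  then show ?case using pres_eq.pe_rel[of S "u @ u'" v r R] by simp
qed

lemma pres_eq_right: "pres_eq S R w w' \<Longrightarrow> word_on S u \<Longrightarrow> pres_eq S R (w @ u) (w' @ u)"
proof (induction rule: pres_eq.induct)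
  case (pe_refl w) then show ?case by (simp add: pres_eq.pe_refl)
next
  case (pe_sym w w') then show ?case by (blast intro: pres_eq.pe_sym)
next
  case (pe_trans w w' w'') then show ?case by (blast intro: pres_eq.pe_trans)
next
  case (pe_cancel u' v x b)
  then show ?case using pres_eq.pe_cancel[of S u' "v @ u" x R b] by simp
next
  case (pe_rel u' v r)
  then show ?case using pres_eq.pe_rel[of S u' "v @ u" r R] by simp
qed

lemma pres_eq_app: "pres_eq S R w w' \<Longrightarrow> pres_eq S R v v' \<Longrightarrow> pres_eq S R (w @ v) (w' @ v')"
  by (meson pe_trans pres_eq_left pres_eq_right pres_eq_words)

lemma pres_class_eq: "pres_eq S R w w' \<Longrightarrow> pres_class S R w = pres_class S R w'"
  unfolding pres_class_def by (blast intro: pe_trans pe_sym)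

lemma pres_class_eqD: "pres_class S R w = pres_class S R w' \<Longrightarrow> word_on S w' \<Longrightarrow> pres_eq S R w w'"
  unfolding pres_class_def using pe_refl by blast

lemma some_in_class: "word_on S w \<Longrightarrow> pres_eq S R w (SOME a. a \<in> pres_class S R w)"
proof -
  assume "word_on S w"
  then have "w \<in> pres_class S R w" by (simp add: pres_class_def pe_refl)
  then have "(SOME a. a \<in> pres_class S R w) \<in> pres_class S R w" by (rule someI)
  then show ?thesis by (simp add: pres_class_def)
qed

lemma pg_carrier: "carrier (presented_group S R) = pres_class S R ` {w. word_on S w}"
  by (simp add: presented_group_def)
lemma pg_one: "\<one>\<^bsub>presented_group S R\<^esub> = pres_class S R []"
  by (simp add: presented_group_def)

lemma pg_mult: "word_on S w \<Longrightarrow> word_on S v \<Longrightarrow>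
  pres_class S R w \<otimes>\<^bsub>presented_group S R\<^esub> pres_class S R v = pres_class S R (w @ v)"
  unfolding presented_group_def apply simp
  apply (rule pres_class_eq[symmetric])
  apply (rule pres_eq_app)
  using some_in_class by blast+

definition invw :: "'a word \<Rightarrow> 'a word" where
  "invw w = rev (map (\<lambda>(x, b). (x, \<not> b)) w)"

lemma word_on_invw[simp]: "word_on S (invw w) \<longleftrightarrow> word_on S w"
proof -
  have "fst ` (\<lambda>(x, b). (x, \<not> b)) ` A = fst ` A" for A :: "('a \<times> bool) set"
    by (force simp: image_iff)
  then show ?thesis by (simp add: word_on_def invw_def)
qed

lemma invw_invw[simp]: "invw (invw w) = w"
  by (induction w) (auto simp: invw_def)

lemma pres_eq_invw: "word_on S w \<Longrightarrow> pres_eq S R (w @ invw w) []"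
proof (induction w)
  case Nil then show ?case by (simp add: pe_refl invw_def)
next
  case (Cons a w)
  obtain x b where a: "a = (x, b)" by fastforce
  have xS: "x \<in> S" and wS: "word_on S w" using Cons a by auto
  have "pres_eq S R ([(x,b)] @ (w @ invw w) @ [(x, \<not> b)]) ([(x,b)] @ [] @ [(x, \<not> b)])"
    apply (rule pres_eq_left) apply (rule pres_eq_right) using Cons.IH wS xS by auto
  moreover have "pres_eq S R ([] @ [(x,b),(x, \<not> b)] @ []) ([] @ [])"
    by (rule pe_cancel) (auto simp: xS)
  ultimately show ?case unfolding a invw_def by (auto intro: pe_trans)
qed

lemma group_pg: "group (presented_group S R)"
proof (rule groupI)
  let ?G = "presented_group S R"
  show "x \<otimes>\<^bsub>?G\<^esub> y \<in> carrier ?G" if "x \<in> carrier ?G" "y \<in> carrier ?G" for x y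
    using that by (auto simp: pg_carrier pg_mult)
  show "\<one>\<^bsub>?G\<^esub> \<in> carrier ?G" by (auto simp: pg_carrier pg_one)
  show "x \<otimes>\<^bsub>?G\<^esub> y \<otimes>\<^bsub>?G\<^esub> z = x \<otimes>\<^bsub>?G\<^esub> (y \<otimes>\<^bsub>?G\<^esub> z)"
    if "x \<in> carrier ?G" "y \<in> carrier ?G" "z \<in> carrier ?G" for x y z
    using that by (auto simp: pg_carrier pg_mult)
  show "\<one>\<^bsub>?G\<^esub> \<otimes>\<^bsub>?G\<^esub> x = x" if "x \<in> carrier ?G" for x
    using that by (auto simp: pg_carrier pg_mult pg_one)
  show "\<exists>y\<in>carrier ?G. y \<otimes>\<^bsub>?G\<^esub> x = \<one>\<^bsub>?G\<^esub>" if xG: "x \<in> carrier ?G" for x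
  proof -
    obtain w where w: "word_on S w" "x = pres_class S R w" using xG unfolding pg_carrier by blast
    have "pres_class S R (invw w) \<otimes>\<^bsub>?G\<^esub> x = \<one>\<^bsub>?G\<^esub>"
      using w pres_eq_invw[of S "invw w" R] by (simp add: pg_mult pg_one pres_class_eq)
    moreover have "pres_class S R (invw w) \<in> carrier ?G" using w by (auto simp: pg_carrier)
    ultimately show ?thesis by blast
  qed
qed


lemma walk_append: "walk G x y (xs @ ys) \<longleftrightarrow> (\<exists>z. walk G x z xs \<and> walk G z y ys)"
  by (induction xs arbitrary: x) auto

definition revw :: "('v \<times> 'v) list \<Rightarrow> ('v \<times> 'v) list" where
  "revw es = rev (map rev_edge es)"

lemma revw_simps[simp]: "revw [] = []" "revw (e # es) = revw es @ [rev_edge e]"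
  "length (revw es) = length es"
  by (auto simp: revw_def)

lemma walk_revw: "walk G x y es \<Longrightarrow> walk G y x (revw es)"
proof (induction es arbitrary: x)
  case Nil then show ?case by simp
next
  case (Cons e es)
  obtain a b where e: "e = (a, b)" by fastforce
  have "{b, a} = {a, b}" by auto
  then show ?case using Cons e by (auto simp: walk_append rev_edge_def)
qed

lemma walk_mono: "walk G x y es \<Longrightarrow> G \<subseteq> G' \<Longrightarrow> walk G' x y es"
  by (induction es arbitrary: x) auto

lemma walk_edges: "walk (one_skel \<Delta>) x y es \<Longrightarrow> set es \<subseteq> edges \<Delta>"
proof (induction es arbitrary: x)
  case Nil then show ?case by simp
next
  case (Cons e es)
  obtain a b where e: "e = (a, b)" by fastforce
  have "walk (one_skel \<Delta>) b y es" "a \<noteq> b" "{a,b} \<in> \<Delta>" using Cons.prems e by (auto simp: one_skel_def)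
  then show ?case using Cons.IH e by (simp add: edges_def)
qed

lemma walk_vertex: "walk (one_skel \<Delta>) x y es \<Longrightarrow> es \<noteq> [] \<Longrightarrow> x \<in> vertices \<Delta>"
  by (cases es) (auto simp: one_skel_def vertices_def)

lemma walk_avoid: "walk G x y es \<Longrightarrow> (\<forall>(c,d)\<in>set es. {c,d} \<noteq> s) \<Longrightarrow> walk (G - {s}) x y es"
  by (induction es arbitrary: x) auto

definition sw :: "'v set set \<Rightarrow> 'v \<Rightarrow> 'v \<Rightarrow> ('v \<times> 'v) list \<Rightarrow> bool" where
  "sw G u v es \<longleftrightarrow> walk G u v es \<and> (\<forall>es'. walk G u v es' \<longrightarrow> length es \<le> length es')"

lemma sw_tail:
  assumes "sw G u v ((u, a) # r)" "(c, d) \<in> set r"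
  shows "c \<noteq> u \<and> d \<noteq> u"
proof -
  obtain r1 r2 where r: "r = r1 @ (c, d) # r2" using assms(2) by (meson split_list)
  have wr: "walk G a v r" using assms(1) by (simp add: sw_def)
  then obtain z where "walk G a z r1" "walk G z v ((c, d) # r2)" unfolding r walk_append by blast
  then have w1: "walk G c v ((c, d) # r2)" and w2: "walk G d v r2" by auto
  have m: "\<And>es'. walk G u v es' \<Longrightarrow> Suc (length r) \<le> length es'" using assms(1) by (simp add: sw_def)
  show ?thesis
  proof
    show "c \<noteq> u" using m[of "(c,d) # r2"] w1 r by auto
    show "d \<noteq> u" using m[of r2] w2 r by auto
  qed
qed

definition treecond :: "'v set set \<Rightarrow> bool" where
  "treecond T \<longleftrightarrow> (\<forall>s\<in>T. \<forall>a b. s = {a, b} \<longrightarrow> \<not> (\<exists>es. walk (T - {s}) a b es))"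

lemma sw_unique: "sw G u v es1 \<Longrightarrow> sw G u v es2 \<Longrightarrow> treecond G \<Longrightarrow> es1 = es2"
proof (induction es1 arbitrary: u es2)
  case Nil
  have uv: "u = v" using Nil.prems(1) by (simp add: sw_def)
  have "walk G u v []" using uv by simp
  then have "length es2 \<le> 0" using Nil.prems(2) unfolding sw_def by (metis list.size(3))
  then show ?case by simp
next
  case (Cons e r1)
  have l1: "length (e # r1) \<le> length es2" using Cons.prems(1,2) unfolding sw_def by blast
  have l2: "length es2 \<le> length (e # r1)" using Cons.prems(1,2) unfolding sw_def by blast
  have len: "length (e # r1) = length es2" using l1 l2 by simp
  obtain x a where e: "e = (x, a)" by fastforce
  have x: "x = u" and ua: "u \<noteq> a" "{u, a} \<in> G" and w1: "walk G a v r1"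
    using Cons.prems(1) e by (auto simp: sw_def)
  obtain f r2 where es2: "es2 = f # r2" using len by (cases es2) auto
  obtain y b where f: "f = (y, b)" by fastforce
  have y: "y = u" and ub: "u \<noteq> b" "{u, b} \<in> G" and w2: "walk G b v r2"
    using Cons.prems(2) es2 f by (auto simp: sw_def)
  have sw1: "sw G u v ((u, a) # r1)" using Cons.prems(1) e x by simp
  have sw2: "sw G u v ((u, b) # r2)" using Cons.prems(2) es2 f y by simp
  have ab: "a = b"
  proof (rule ccontr)
    assume nab: "a \<noteq> b"
    let ?s = "{u, a}"
    let ?W = "((u, b) # r2) @ revw r1"
    have W: "walk G u a ?W" using w2 ub walk_revw[OF w1] by (auto simp: walk_append)
    have "\<forall>(c,d)\<in>set ?W. {c,d} \<noteq> ?s"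
    proof
      fix p assume p: "p \<in> set ?W"
      obtain c d where pcd: "p = (c, d)" by fastforce
      have "{c, d} \<noteq> ?s"
      proof (cases "p = (u, b)")
        case True then show ?thesis using pcd nab ub by (auto simp: doubleton_eq_iff)
      next
        case False
        then have "p \<in> set r2 \<or> p \<in> set (revw r1)" using p by auto
        then have "c \<noteq> u \<and> d \<noteq> u"
        proof
          assume "p \<in> set r2" then show ?thesis using sw_tail[OF sw2] pcd by blast
        next
          assume "p \<in> set (revw r1)"
          then have "(d, c) \<in> set r1" using pcd by (auto simp: revw_def rev_edge_def)
          then show ?thesis using sw_tail[OF sw1] by blast
        qed
        then show ?thesis by auto
      qed
      then show "case p of (c, d) \<Rightarrow> {c, d} \<noteq> ?s" using pcd by simp
    qed
    then have "walk (G - {?s}) u a ?W" using walk_avoid[OF W] by blast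
    then show False using Cons.prems(3) ua unfolding treecond_def by blast
  qed
  have "sw G a v r1"
    unfolding sw_def
  proof (intro conjI allI impI)
    show "walk G a v r1" by (rule w1)
    fix es' assume "walk G a v es'"
    then have "walk G u v ((u, a) # es')" using ua by simp
    then show "length r1 \<le> length es'" using sw1 unfolding sw_def by fastforce
  qed
  moreover have "sw G a v r2"
    unfolding sw_def
  proof (intro conjI allI impI)
    show "walk G a v r2" using w2 ab by simp
    fix es' assume "walk G a v es'"
    then have "walk G u v ((u, b) # es')" using ub ab by simp
    then show "length r2 \<le> length es'" using sw2 unfolding sw_def by fastforce
  qed
  ultimately have "r1 = r2" using Cons.IH Cons.prems(3) by blast
  then show ?case using e x es2 f y ab by simp
qed

lemma rev_edge_rev_edge[simp]: "rev_edge (rev_edge e) = e"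
  by (simp add: rev_edge_def)

lemma revw_append[simp]: "revw (xs @ ys) = revw ys @ revw xs"
  by (simp add: revw_def)

lemma revw_revw[simp]: "revw (revw es) = es"
  by (induction es) auto

lemma sw_revw:
  assumes a: "sw G u v es" shows "sw G v u (revw es)"
proof -
  have w0: "walk G u v es" using a by (simp add: sw_def)
  have w: "walk G v u (revw es)" by (rule walk_revw[OF w0])
  have "length (revw es) \<le> length es'" if "walk G v u es'" for es'
  proof -
    have "walk G u v (revw es')" using that by (rule walk_revw)
    moreover have "\<forall>es'. walk G u v es' \<longrightarrow> length es \<le> length es'" using a by (simp add: sw_def)
    ultimately have "length es \<le> length (revw es')" by blast
    then show ?thesis by simp
  qed
  then show ?thesis using w by (simp add: sw_def)
qed

lemma sw_exists: assumes "walk G u v es" shows "\<exists>es. sw G u v es"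
  unfolding sw_def by (rule ex_has_least_nat[of "walk G u v" es length, OF assms])

lemma tree_path_sw:
  assumes "spanning_tree \<Delta> T" "u \<in> vertices \<Delta>" "v \<in> vertices \<Delta>"
  shows "sw T u v (tree_path T u v)"
proof -
  have tc: "treecond T" using assms(1) by (simp add: spanning_tree_def treecond_def)
  have "\<exists>es. walk T u v es" using assms unfolding spanning_tree_def by blast
  then obtain es where "walk T u v es" by blast
  then obtain es0 where es: "sw T u v es0" using sw_exists[of T u v es] by blast
  have tpd: "tree_path T u v = (THE es. sw T u v es)" by (simp add: tree_path_def sw_def)
  have "tree_path T u v = es0" unfolding tpd
  proof (rule the_equality)
    show "sw T u v es0" by (rule es)
    fix x assume "sw T u v x" then show "x = es0" using sw_unique[OF _ es tc] by blast
  qed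
  then show ?thesis using es by simp
qed

lemma tree_path_rev:
  assumes "spanning_tree \<Delta> T" "u \<in> vertices \<Delta>" "v \<in> vertices \<Delta>"
  shows "tree_path T v u = revw (tree_path T u v)"
proof -
  have tc: "treecond T" using assms(1) by (simp add: spanning_tree_def treecond_def)
  show ?thesis using sw_unique[OF tree_path_sw[OF assms(1,3,2)] sw_revw[OF tree_path_sw[OF assms]] tc] .
qed

lemma tree_path_self:
  assumes "spanning_tree \<Delta> T" "u \<in> vertices \<Delta>"
  shows "tree_path T u u = []"
proof -
  have tc: "treecond T" using assms(1) by (simp add: spanning_tree_def treecond_def)
  have "sw T u u []" by (simp add: sw_def)
  then show ?thesis using sw_unique[OF tree_path_sw[OF assms assms(2)] _ tc] by blast
qed

lemma tree_path_walk:
  assumes "spanning_tree \<Delta> T" "u \<in> vertices \<Delta>" "v \<in> vertices \<Delta>"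
  shows "walk (one_skel \<Delta>) u v (tree_path T u v)"
proof -
  have "walk T u v (tree_path T u v)" using tree_path_sw[OF assms] by (simp add: sw_def)
  moreover have "T \<subseteq> one_skel \<Delta>" using assms(1) by (simp add: spanning_tree_def)
  ultimately show ?thesis by (rule walk_mono)
qed

lemma cpath_walk: "set es \<subseteq> edges \<Delta> \<Longrightarrow> es \<noteq> [] \<Longrightarrow>
   (\<forall>i. Suc i < length es \<longrightarrow> snd (es ! i) = fst (es ! Suc i)) \<Longrightarrow>
   walk (one_skel \<Delta>) (fst (hd es)) (snd (last es)) es"
proof (induction es)
  case Nil then show ?case by simp
next
  case (Cons e es)
  obtain a b where e: "e = (a, b)" by fastforce
  have eb: "a \<noteq> b" "{a, b} \<in> one_skel \<Delta>" using Cons.prems(1) e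
    by (auto simp: edges_def one_skel_def)
  show ?case
  proof (cases "es = []")
    case True then show ?thesis using e eb by simp
  next
    case False
    have "\<forall>i. Suc i < length es \<longrightarrow> snd (es ! i) = fst (es ! Suc i)"
    proof (intro allI impI)
      fix i assume "Suc i < length es"
      then have "Suc (Suc i) < length (e # es)" by simp
      then have "snd ((e#es) ! Suc i) = fst ((e#es) ! Suc (Suc i))" using Cons.prems(3) by blast
      then show "snd (es ! i) = fst (es ! Suc i)" by simp
    qed
    then have w: "walk (one_skel \<Delta>) (fst (hd es)) (snd (last es)) es"
      using Cons.IH Cons.prems False by auto
    have "snd e = fst (es ! 0)" using Cons.prems(3)[rule_format, of 0] False by simp
    then have "b = fst (hd es)" using e False by (simp add: hd_conv_nth)
    then show ?thesis using w e eb False by simp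
  qed
qed


lemma (in group) cancel_simps[simp]:
  "x \<in> carrier G \<Longrightarrow> y \<in> carrier G \<Longrightarrow> x \<otimes> (inv x \<otimes> y) = y"
  "x \<in> carrier G \<Longrightarrow> y \<in> carrier G \<Longrightarrow> inv x \<otimes> (x \<otimes> y) = y"
  by (simp_all add: m_assoc[symmetric])

lemma (in group) eq_of_mult_inv: "x \<in> carrier G \<Longrightarrow> y \<in> carrier G \<Longrightarrow> x \<otimes> inv y = \<one> \<Longrightarrow> x = y"
  by (metis inv_closed inv_equality inv_inv)

lemma (in group) conj_int_pow:
  assumes a: "a \<in> carrier G" and x: "x \<in> carrier G"
  shows "(a \<otimes> x \<otimes> inv a) [^] (n::int) = a \<otimes> x [^] n \<otimes> inv a"
proof -
  let ?c = "\<lambda>y. a \<otimes> y \<otimes> inv a"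
  have h: "?c \<in> hom G G" by (rule homI) (auto simp: a m_assoc)
  have "?c (x [^] n) = ?c x [^] n" using hom_int_pow[OF h x is_group is_group] .
  then show ?thesis by simp
qed

lemma rev_edges: "e \<in> edges \<Delta> \<Longrightarrow> rev_edge e \<in> edges \<Delta>"
  by (auto simp: edges_def rev_edge_def insert_commute)

lemma set_revw: "set (revw es) = rev_edge ` set es"
  by (simp add: revw_def)

lemma edge_vertices: "e \<in> edges \<Delta> \<Longrightarrow> fst e \<in> vertices \<Delta> \<and> snd e \<in> vertices \<Delta>"
  by (auto simp: edges_def vertices_def)

lemma walk_end_vertex: "walk (one_skel \<Delta>) a b es \<Longrightarrow> a \<in> vertices \<Delta> \<Longrightarrow> b \<in> vertices \<Delta>"
proof (induction es arbitrary: a)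
  case Nil then show ?case by simp
next
  case (Cons e es)
  obtain x c where e: "e = (x, c)" by fastforce
  have "c \<in> vertices \<Delta>" "walk (one_skel \<Delta>) c b es" using Cons.prems e
    by (auto simp: one_skel_def vertices_def)
  then show ?case using Cons.IH by blast
qed

locale bbs = group G for G :: "('v \<times> 'v) word set monoid" (structure) +
  fixes \<Delta> T :: "'v set set" and q :: 'v and \<theta> :: "('v \<times> 'v) word set \<Rightarrow> ('v \<times> 'v) word set"
  assumes G_def: "G = BB_group \<Delta>"
    and sc: "simplicial_complex \<Delta>" and simc: "simply_connected \<Delta>"
    and qv: "q \<in> vertices \<Delta>" and st: "spanning_tree \<Delta> T"
    and th_iso: "\<theta> \<in> iso G G"
    and th_def: "\<forall>e\<in>edges \<Delta>. \<theta> (bbgen \<Delta> e) =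
           tp \<Delta> T 1 q (fst e) \<otimes>\<^bsub>G\<^esub> bbgen \<Delta> e \<otimes>\<^bsub>G\<^esub> tp \<Delta> T 1 (fst e) q"
begin

lemma bbgen_carrier: "e \<in> edges \<Delta> \<Longrightarrow> bbgen \<Delta> e \<in> carrier G"
  unfolding G_def BB_group_def bbgen_def pg_carrier by (rule imageI) simp

lemma bb_rev: assumes e: "e \<in> edges \<Delta>" shows "bbgen \<Delta> e \<otimes> bbgen \<Delta> (rev_edge e) = \<one>"
proof -
  have r: "[(e,True),(rev_edge e,True)] \<in> BB_rels \<Delta>" unfolding BB_rels_def using e by blast
  have "pres_eq (edges \<Delta>) (BB_rels \<Delta>) ([] @ [(e,True),(rev_edge e,True)] @ []) ([] @ [])"
    by (rule pe_rel) (simp_all add: r e rev_edges)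
  then show ?thesis unfolding G_def BB_group_def bbgen_def
    by (simp add: pg_mult e rev_edges pg_one pres_class_eq)
qed

lemma bb_inv: assumes e: "e \<in> edges \<Delta>" shows "inv (bbgen \<Delta> e) = bbgen \<Delta> (rev_edge e)"
  apply (rule inv_equality)
  using bb_rev[OF rev_edges[OF e]] bbgen_carrier[OF e] bbgen_carrier[OF rev_edges[OF e]] by simp_all

lemma bb_tri:
  assumes "e \<in> edges \<Delta>" "f \<in> edges \<Delta>" "g \<in> edges \<Delta>" "snd e = fst f" "snd f = fst g" "snd g = fst e"
  shows "bbgen \<Delta> e \<otimes> bbgen \<Delta> f \<otimes> bbgen \<Delta> g = \<one>"
proof -
  have r: "[(e,True),(f,True),(g,True)] \<in> BB_rels \<Delta>" unfolding BB_rels_def using assms by blast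
  have "pres_eq (edges \<Delta>) (BB_rels \<Delta>) ([] @ [(e,True),(f,True),(g,True)] @ []) ([] @ [])"
    by (rule pe_rel) (simp_all add: r assms)
  then show ?thesis unfolding G_def BB_group_def bbgen_def
    by (simp add: pg_mult assms pg_one pres_class_eq)
qed

lemma pp_Nil[simp]: "path_pow \<Delta> n [] = \<one>"
  by (simp add: path_pow_def G_def)
lemma pp_Cons[simp]: "path_pow \<Delta> n (e # es) = bbgen \<Delta> e [^] n \<otimes> path_pow \<Delta> n es"
  by (simp add: path_pow_def G_def)

lemma pp_closed: "set es \<subseteq> edges \<Delta> \<Longrightarrow> path_pow \<Delta> n es \<in> carrier G"
  by (induction es) (auto simp: bbgen_carrier)

lemma pp_append: "set xs \<subseteq> edges \<Delta> \<Longrightarrow> set ys \<subseteq> edges \<Delta> \<Longrightarrow>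
   path_pow \<Delta> n (xs @ ys) = path_pow \<Delta> n xs \<otimes> path_pow \<Delta> n ys"
  by (induction xs) (auto simp: m_assoc bbgen_carrier pp_closed)

lemma pp_zero[simp]: "path_pow \<Delta> 0 es = \<one>"
  by (induction es) auto

lemma pp_revw: "set es \<subseteq> edges \<Delta> \<Longrightarrow> path_pow \<Delta> n (revw es) = inv (path_pow \<Delta> n es)"
proof (induction es)
  case Nil then show ?case by simp
next
  case (Cons e es)
  have e: "e \<in> edges \<Delta>" and es: "set es \<subseteq> edges \<Delta>" using Cons.prems by auto
  have re: "set (revw es) \<subseteq> edges \<Delta>" unfolding set_revw using es rev_edges by blast
  have "path_pow \<Delta> n (revw (e # es)) = path_pow \<Delta> n (revw es) \<otimes> path_pow \<Delta> n [rev_edge e]"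
    using pp_append[OF re, of "[rev_edge e]" n] rev_edges[OF e] by simp
  also have "\<dots> = inv (path_pow \<Delta> n es) \<otimes> inv (bbgen \<Delta> e [^] n)"
    using Cons.IH es e by (simp add: bb_inv[symmetric] int_pow_inv bbgen_carrier rev_edges)
  also have "\<dots> = inv (path_pow \<Delta> n (e # es))"
    using e es by (simp add: inv_mult_group bbgen_carrier pp_closed)
  finally show ?case .
qed

lemma card3_neq: "card {a, b, c} = 3 \<Longrightarrow> a \<noteq> c"
proof
  assume "card {a, b, c} = 3" "a = c"
  moreover have "card {a, b, a} \<le> 2" by (simp add: card_insert_if)
  ultimately show False by simp
qed

lemma sc_sub: "simplicial_complex \<Delta> \<Longrightarrow> s \<in> \<Delta> \<Longrightarrow> t \<subseteq> s \<Longrightarrow> t \<noteq> {} \<Longrightarrow> t \<in> \<Delta>"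
  unfolding simplicial_complex_def by blast

lemma tri_ac: "{a, b, c} \<in> \<Delta> \<Longrightarrow> card {a, b, c} = 3 \<Longrightarrow> a \<noteq> c \<and> {a, c} \<in> \<Delta>"
proof -
  assume h: "{a, b, c} \<in> \<Delta>" "card {a, b, c} = 3"
  have "{a, c} \<subseteq> {a, b, c}" by auto
  then have "{a, c} \<in> \<Delta>" using sc_sub[OF sc h(1)] by blast
  then show ?thesis using card3_neq[OF h(2)] by simp
qed

lemma ep_walks: "ep_eq \<Delta> x y es es' \<Longrightarrow> walk (one_skel \<Delta>) x y es \<and> walk (one_skel \<Delta>) x y es'"
proof (induction rule: ep_eq.induct)
  case (ep_refl es) then show ?case by simp
next
  case (ep_sym es es') then show ?case by simp
next
  case (ep_trans es es' es'') then show ?case by simp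
next
  case (ep_back u e w)
  obtain a b where e: "e = (a, b)" by fastforce
  from ep_back.hyps obtain z where z1: "walk (one_skel \<Delta>) x z u"
    and z2: "walk (one_skel \<Delta>) z y ([e, rev_edge e] @ w)"
    unfolding walk_append by blast
  have "walk (one_skel \<Delta>) z y w" using z2 e by (clarsimp simp: rev_edge_def)
  then have "walk (one_skel \<Delta>) x y (u @ w)" using z1 unfolding walk_append by blast
  then show ?case using ep_back.hyps by simp
next
  case (ep_tri u a b c w)
  from ep_tri.hyps(1) obtain z where z1: "walk (one_skel \<Delta>) x z u"
    and z2: "walk (one_skel \<Delta>) z y ([(a, b), (b, c)] @ w)"
    unfolding walk_append by blast
  have ac: "a \<noteq> c" "{a, c} \<in> \<Delta>" using tri_ac[OF ep_tri.hyps(2,3)] by auto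
  then have "{a, c} \<in> one_skel \<Delta>" by (simp add: one_skel_def)
  then have "walk (one_skel \<Delta>) z y ([(a, c)] @ w)" using z2 ac by simp
  then have "walk (one_skel \<Delta>) x y (u @ [(a, c)] @ w)" using z1 unfolding walk_append by blast
  then show ?case using ep_tri.hyps by simp
qed

lemma ep_pp: "ep_eq \<Delta> x y es es' \<Longrightarrow> path_pow \<Delta> 1 es = path_pow \<Delta> 1 es'"
proof (induction rule: ep_eq.induct)
  case (ep_refl es) then show ?case by simp
next
  case (ep_sym es es') then show ?case by simp
next
  case (ep_trans es es' es'') then show ?case by simp
next
  case (ep_back u e w)
  have E: "set (u @ [e, rev_edge e] @ w) \<subseteq> edges \<Delta>" using walk_edges[OF ep_back.hyps] .
  then have u: "set u \<subseteq> edges \<Delta>" and w: "set w \<subseteq> edges \<Delta>" and e: "e \<in> edges \<Delta>" by auto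
  have "path_pow \<Delta> 1 (u @ [e, rev_edge e] @ w) = path_pow \<Delta> 1 u \<otimes> path_pow \<Delta> 1 ([e, rev_edge e] @ w)"
    using pp_append[OF u] E by auto
  also have "path_pow \<Delta> 1 ([e, rev_edge e] @ w) = path_pow \<Delta> 1 w"
  proof -
    have cg: "bbgen \<Delta> e \<in> carrier G" "bbgen \<Delta> (rev_edge e) \<in> carrier G"
      using bbgen_carrier[OF e] bbgen_carrier[OF rev_edges[OF e]] by auto
    have pw: "path_pow \<Delta> 1 w \<in> carrier G" using w by (rule pp_closed)
    have "path_pow \<Delta> 1 ([e, rev_edge e] @ w) = bbgen \<Delta> e \<otimes> (bbgen \<Delta> (rev_edge e) \<otimes> path_pow \<Delta> 1 w)"
      using cg by simp
    also have "\<dots> = path_pow \<Delta> 1 w" unfolding bb_inv[OF e, symmetric] using cg pw by simp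
    finally show ?thesis .
  qed
  finally show ?case using pp_append[OF u w] by simp
next
  case (ep_tri u a b c w)
  have E: "set (u @ [(a, b), (b, c)] @ w) \<subseteq> edges \<Delta>" using walk_edges[OF ep_tri.hyps(1)] .
  then have u: "set u \<subseteq> edges \<Delta>" and w: "set w \<subseteq> edges \<Delta>" and ab: "(a, b) \<in> edges \<Delta>"
    and bc: "(b, c) \<in> edges \<Delta>" by auto
  have ac0: "a \<noteq> c" and "{a, c} \<in> \<Delta>" using tri_ac[OF ep_tri.hyps(2,3)] by auto
  then have ac: "(a, c) \<in> edges \<Delta>" and ca: "(c, a) \<in> edges \<Delta>" using ac0
    by (auto simp: edges_def insert_commute)
  have cg: "bbgen \<Delta> (a, b) \<in> carrier G" "bbgen \<Delta> (b, c) \<in> carrier G" "bbgen \<Delta> (a, c) \<in> carrier G"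
    using ab bc ac bbgen_carrier by auto
  have t1: "bbgen \<Delta> (a, b) \<otimes> bbgen \<Delta> (b, c) \<otimes> bbgen \<Delta> (c, a) = \<one>"
    by (rule bb_tri) (simp_all add: ab bc ca)
  have t2: "bbgen \<Delta> (c, a) = inv (bbgen \<Delta> (a, c))" using bb_inv[OF ac] by (simp add: rev_edge_def)
  have t3: "bbgen \<Delta> (a, b) \<otimes> bbgen \<Delta> (b, c) \<otimes> inv (bbgen \<Delta> (a, c)) = \<one>"
    using t1 unfolding t2 .
  have t: "bbgen \<Delta> (a, b) \<otimes> bbgen \<Delta> (b, c) = bbgen \<Delta> (a, c)"
    by (rule eq_of_mult_inv[OF _ cg(3) t3]) (simp add: cg)
  have pw: "path_pow \<Delta> 1 w \<in> carrier G" using w by (rule pp_closed)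
  have "path_pow \<Delta> 1 ([(a, b), (b, c)] @ w) = bbgen \<Delta> (a, b) \<otimes> (bbgen \<Delta> (b, c) \<otimes> path_pow \<Delta> 1 w)"
    using cg by simp
  also have "\<dots> = (bbgen \<Delta> (a, b) \<otimes> bbgen \<Delta> (b, c)) \<otimes> path_pow \<Delta> 1 w"
    using cg pw by (simp only: m_assoc)
  also have "\<dots> = path_pow \<Delta> 1 ([(a, c)] @ w)" unfolding t using cg by simp
  finally have "path_pow \<Delta> 1 ([(a, b), (b, c)] @ w) = path_pow \<Delta> 1 ([(a, c)] @ w)" .
  moreover have "set ([(a, b), (b, c)] @ w) \<subseteq> edges \<Delta>" "set ([(a, c)] @ w) \<subseteq> edges \<Delta>"
    using ab bc ac w by auto
  ultimately show ?case using pp_append[OF u] by simp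
qed

lemma loop_pp: assumes "walk (one_skel \<Delta>) x x es" shows "path_pow \<Delta> 1 es = \<one>"
proof (cases "es = []")
  case True then show ?thesis by simp
next
  case False
  then have "x \<in> vertices \<Delta>" by (rule walk_vertex[OF assms])
  moreover have "\<forall>x\<in>vertices \<Delta>. \<forall>es. walk (one_skel \<Delta>) x x es \<longrightarrow> ep_eq \<Delta> x x es []"
    using simc by (simp add: simply_connected_def)
  ultimately have "ep_eq \<Delta> x x es []" using assms by blast
  then have "path_pow \<Delta> 1 es = path_pow \<Delta> 1 []" by (rule ep_pp)
  then show ?thesis by simp
qed

lemma pp_indep:
  assumes w1: "walk (one_skel \<Delta>) x y es" and w2: "walk (one_skel \<Delta>) x y es'"
  shows "path_pow \<Delta> 1 es = path_pow \<Delta> 1 es'"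
proof -
  have r: "walk (one_skel \<Delta>) y x (revw es')" by (rule walk_revw[OF w2])
  have "walk (one_skel \<Delta>) x x (es @ revw es')" unfolding walk_append using w1 r by blast
  then have l: "path_pow \<Delta> 1 (es @ revw es') = \<one>" by (rule loop_pp)
  have e1: "set es \<subseteq> edges \<Delta>" using w1 by (rule walk_edges)
  have e2: "set es' \<subseteq> edges \<Delta>" using w2 by (rule walk_edges)
  have e3: "set (revw es') \<subseteq> edges \<Delta>" using r by (rule walk_edges)
  have "path_pow \<Delta> 1 es \<otimes> inv (path_pow \<Delta> 1 es') = \<one>"
    using l pp_append[OF e1 e3] pp_revw[OF e2] by simp
  then show ?thesis using eq_of_mult_inv[OF pp_closed[OF e1] pp_closed[OF e2]] by blast
qed

end

context bbs begin

lemma tpw: "u \<in> vertices \<Delta> \<Longrightarrow> v \<in> vertices \<Delta> \<Longrightarrow> walk (one_skel \<Delta>) u v (tree_path T u v)"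
  by (rule tree_path_walk[OF st])

lemma tpe: "u \<in> vertices \<Delta> \<Longrightarrow> v \<in> vertices \<Delta> \<Longrightarrow> set (tree_path T u v) \<subseteq> edges \<Delta>"
  by (rule walk_edges[OF tpw])

lemma tp_closed[simp]: "u \<in> vertices \<Delta> \<Longrightarrow> v \<in> vertices \<Delta> \<Longrightarrow> tp \<Delta> T n u v \<in> carrier G"
  unfolding tp_def by (rule pp_closed[OF tpe])

lemma tp_inv: assumes "u \<in> vertices \<Delta>" "v \<in> vertices \<Delta>"
  shows "tp \<Delta> T n v u = inv (tp \<Delta> T n u v)"
  unfolding tp_def tree_path_rev[OF st assms] by (rule pp_revw[OF tpe[OF assms]])

lemma tp_self[simp]: "u \<in> vertices \<Delta> \<Longrightarrow> tp \<Delta> T n u u = \<one>"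
  unfolding tp_def by (simp add: tree_path_self[OF st])

lemma tp_zero[simp]: "tp \<Delta> T 0 u v = \<one>"
  by (simp add: tp_def)

lemma tp1_walk: "walk (one_skel \<Delta>) u v es \<Longrightarrow> u \<in> vertices \<Delta> \<Longrightarrow> v \<in> vertices \<Delta> \<Longrightarrow>
  tp \<Delta> T 1 u v = path_pow \<Delta> 1 es"
  unfolding tp_def by (rule pp_indep[OF tpw])

lemma th_hom: "\<theta> \<in> hom G G" using th_iso by (simp add: iso_def)
lemma th_gh: "group_hom G G \<theta>"
  by (simp add: group_hom_def group_hom_axioms_def th_hom)
lemma th_closed[simp]: "x \<in> carrier G \<Longrightarrow> \<theta> x \<in> carrier G"
  by (rule hom_in_carrier[OF th_hom])
lemma th_mult[simp]: "x \<in> carrier G \<Longrightarrow> y \<in> carrier G \<Longrightarrow> \<theta> (x \<otimes> y) = \<theta> x \<otimes> \<theta> y"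
  by (rule hom_mult[OF th_hom])
lemma th_one[simp]: "\<theta> \<one> = \<one>" by (rule group_hom.hom_one[OF th_gh])
lemma th_pow: "x \<in> carrier G \<Longrightarrow> \<theta> (x [^] (n::int)) = \<theta> x [^] n"
  by (rule group_hom.hom_int_pow[OF th_gh])

abbreviation "thi \<equiv> inv_into (carrier G) \<theta>"

lemma thi_iso: "thi \<in> iso G G" by (rule iso_set_sym[OF th_iso])
lemma thi_hom: "thi \<in> hom G G" using thi_iso by (simp add: iso_def)
lemma thi_closed[simp]: "x \<in> carrier G \<Longrightarrow> thi x \<in> carrier G"
  by (rule hom_in_carrier[OF thi_hom])
lemma thi_mult[simp]: "x \<in> carrier G \<Longrightarrow> y \<in> carrier G \<Longrightarrow> thi (x \<otimes> y) = thi x \<otimes> thi y"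
  by (rule hom_mult[OF thi_hom])
lemma thi_eq: assumes "y \<in> carrier G" "\<theta> y = x" shows "thi x = y"
proof -
  have "inj_on \<theta> (carrier G)" using th_iso by (auto simp: iso_def bij_betw_def)
  then show ?thesis using assms by (rule inv_into_f_eq)
qed

lemma edge_cons_walk: "e \<in> edges \<Delta> \<Longrightarrow> walk (one_skel \<Delta>) (snd e) y es \<Longrightarrow> walk (one_skel \<Delta>) (fst e) y (e # es)"
  by (cases e) (auto simp: edges_def one_skel_def)

lemma A1: assumes e: "e \<in> edges \<Delta>"
  shows "tp \<Delta> T 1 (fst e) q = bbgen \<Delta> e \<otimes> tp \<Delta> T 1 (snd e) q"
proof -
  have hu: "fst e \<in> vertices \<Delta>" and hv: "snd e \<in> vertices \<Delta>" using edge_vertices[OF e] by auto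
  have w: "walk (one_skel \<Delta>) (fst e) q (e # tree_path T (snd e) q)"
    by (rule edge_cons_walk[OF e tpw[OF hv qv]])
  have "tp \<Delta> T 1 (fst e) q = path_pow \<Delta> 1 (e # tree_path T (snd e) q)"
    by (rule tp1_walk[OF w hu qv])
  also have "\<dots> = bbgen \<Delta> e \<otimes> tp \<Delta> T 1 (snd e) q"
    using bbgen_carrier[OF e] by (simp add: tp_def)
  finally show ?thesis .
qed

lemma A2: assumes e: "e \<in> edges \<Delta>"
  shows "\<theta> (bbgen \<Delta> e) = tp \<Delta> T 1 q (fst e) \<otimes> bbgen \<Delta> e \<otimes> inv (tp \<Delta> T 1 q (fst e))"
proof -
  have hu: "fst e \<in> vertices \<Delta>" using edge_vertices[OF e] by auto
  show ?thesis using th_def e tp_inv[OF qv hu] by simp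
qed

lemma A3: assumes e: "e \<in> edges \<Delta>"
  shows "\<theta> (bbgen \<Delta> e [^] (n::int)) = tp \<Delta> T 1 q (fst e) \<otimes> bbgen \<Delta> e [^] n \<otimes> inv (tp \<Delta> T 1 q (fst e))"
proof -
  have hu: "fst e \<in> vertices \<Delta>" using edge_vertices[OF e] by auto
  have "\<theta> (bbgen \<Delta> e [^] n) = \<theta> (bbgen \<Delta> e) [^] n" by (rule th_pow[OF bbgen_carrier[OF e]])
  also have "\<dots> = tp \<Delta> T 1 q (fst e) \<otimes> bbgen \<Delta> e [^] n \<otimes> inv (tp \<Delta> T 1 q (fst e))"
    unfolding A2[OF e] by (rule conj_int_pow[OF tp_closed[OF qv hu] bbgen_carrier[OF e]])
  finally show ?thesis .
qed

lemma A4: assumes e: "e \<in> edges \<Delta>"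
  shows "\<theta> (bbgen \<Delta> e [^] (n::int)) = tp \<Delta> T 1 q (fst e) \<otimes> bbgen \<Delta> e [^] (n + 1) \<otimes> tp \<Delta> T 1 (snd e) q"
proof -
  have hu: "fst e \<in> vertices \<Delta>" and hv: "snd e \<in> vertices \<Delta>" using edge_vertices[OF e] by auto
  have cg: "bbgen \<Delta> e \<in> carrier G" by (rule bbgen_carrier[OF e])
  have iv: "inv (tp \<Delta> T 1 q (fst e)) = bbgen \<Delta> e \<otimes> tp \<Delta> T 1 (snd e) q"
    using A1[OF e] tp_inv[OF qv hu] by simp
  have pw: "bbgen \<Delta> e [^] (n + 1) = bbgen \<Delta> e [^] n \<otimes> bbgen \<Delta> e"
    using cg by (simp add: int_pow_mult)
  show ?thesis unfolding A3[OF e] iv pw using cg hu hv qv by (simp add: m_assoc)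
qed

lemma th_walk: "walk (one_skel \<Delta>) a b es \<Longrightarrow> a \<in> vertices \<Delta> \<Longrightarrow>
  \<theta> (path_pow \<Delta> n es) = tp \<Delta> T 1 q a \<otimes> path_pow \<Delta> (n + 1) es \<otimes> tp \<Delta> T 1 b q"
proof (induction es arbitrary: a)
  case Nil
  then have ab: "a = b" by simp
  show ?case using Nil ab tp_inv[OF qv Nil.prems(2), of 1] qv by simp
next
  case (Cons e es)
  have e: "e \<in> edges \<Delta>" using walk_edges[OF Cons.prems(1)] by simp
  have fe: "fst e = a" using Cons.prems(1) by (cases e) simp
  have hc: "snd e \<in> vertices \<Delta>" using edge_vertices[OF e] by auto
  have w: "walk (one_skel \<Delta>) (snd e) b es" using Cons.prems(1) by (cases e) simp
  have es: "set es \<subseteq> edges \<Delta>" by (rule walk_edges[OF w])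
  have hb: "b \<in> vertices \<Delta>" by (rule walk_end_vertex[OF w hc])
  have cg: "bbgen \<Delta> e \<in> carrier G" by (rule bbgen_carrier[OF e])
  have "\<theta> (path_pow \<Delta> n (e # es)) = \<theta> (bbgen \<Delta> e [^] n) \<otimes> \<theta> (path_pow \<Delta> n es)"
    using cg pp_closed[OF es] by simp
  also have "\<dots> = (tp \<Delta> T 1 q a \<otimes> bbgen \<Delta> e [^] (n + 1) \<otimes> tp \<Delta> T 1 (snd e) q) \<otimes>
      (tp \<Delta> T 1 q (snd e) \<otimes> path_pow \<Delta> (n + 1) es \<otimes> tp \<Delta> T 1 b q)"
    unfolding A4[OF e] Cons.IH[OF w hc] fe ..
  also have "\<dots> = tp \<Delta> T 1 q a \<otimes> path_pow \<Delta> (n + 1) (e # es) \<otimes> tp \<Delta> T 1 b q"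
    unfolding tp_inv[OF qv hc, of 1]
    using cg pp_closed[OF es] hc hb qv Cons.prems(2) by (simp add: m_assoc)
  finally show ?case .
qed

lemma thPm: "x \<in> vertices \<Delta> \<Longrightarrow> \<theta> (tp \<Delta> T (-1) q x) = tp \<Delta> T 1 x q"
  unfolding tp_def using th_walk[OF tpw[OF qv], of x "-1"] by (simp add: tp_def[symmetric] qv)

lemma thQm: "x \<in> vertices \<Delta> \<Longrightarrow> \<theta> (tp \<Delta> T (-1) x q) = tp \<Delta> T 1 q x"
  unfolding tp_def using th_walk[OF tpw[OF _ qv], of x "-1"] by (simp add: tp_def[symmetric] qv)

lemma thi_walk: assumes w: "walk (one_skel \<Delta>) a b es" and ha: "a \<in> vertices \<Delta>"
  shows "thi (path_pow \<Delta> n es) = tp \<Delta> T (-1) q a \<otimes> path_pow \<Delta> (n - 1) es \<otimes> tp \<Delta> T (-1) b q"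
proof (rule thi_eq)
  have hb: "b \<in> vertices \<Delta>" by (rule walk_end_vertex[OF w ha])
  have es: "set es \<subseteq> edges \<Delta>" by (rule walk_edges[OF w])
  show "tp \<Delta> T (-1) q a \<otimes> path_pow \<Delta> (n - 1) es \<otimes> tp \<Delta> T (-1) b q \<in> carrier G"
    using ha hb qv pp_closed[OF es] by simp
  have "\<theta> (tp \<Delta> T (-1) q a \<otimes> path_pow \<Delta> (n - 1) es \<otimes> tp \<Delta> T (-1) b q) =
     tp \<Delta> T 1 a q \<otimes> (tp \<Delta> T 1 q a \<otimes> path_pow \<Delta> (n - 1 + 1) es \<otimes> tp \<Delta> T 1 b q) \<otimes> tp \<Delta> T 1 q b"
    using ha hb qv pp_closed[OF es] by (simp add: thPm thQm th_walk[OF w ha])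
  also have "\<dots> = path_pow \<Delta> n es"
    unfolding tp_inv[OF qv ha, of 1] tp_inv[OF qv hb, of 1]
    using ha hb qv pp_closed[OF es] by (simp add: m_assoc)
  finally show "\<theta> (tp \<Delta> T (-1) q a \<otimes> path_pow \<Delta> (n - 1) es \<otimes> tp \<Delta> T (-1) b q) = path_pow \<Delta> n es" .
qed

end

context bbs begin

lemma th_tp: "x \<in> vertices \<Delta> \<Longrightarrow> y \<in> vertices \<Delta> \<Longrightarrow>
   \<theta> (tp \<Delta> T k x y) = tp \<Delta> T 1 q x \<otimes> tp \<Delta> T (k + 1) x y \<otimes> tp \<Delta> T 1 y q"
  unfolding tp_def[of \<Delta> T k] tp_def[of \<Delta> T "k+1"] by (rule th_walk[OF tpw])

lemma thi_tp: "x \<in> vertices \<Delta> \<Longrightarrow> y \<in> vertices \<Delta> \<Longrightarrow>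
   thi (tp \<Delta> T k x y) = tp \<Delta> T (-1) q x \<otimes> tp \<Delta> T (k - 1) x y \<otimes> tp \<Delta> T (-1) y q"
  unfolding tp_def[of \<Delta> T k] tp_def[of \<Delta> T "k-1"] by (rule thi_walk[OF tpw])

context
  fixes e assumes e: "e \<in> edges \<Delta>"
begin

lemma hu: "fst e \<in> vertices \<Delta>" and hv: "snd e \<in> vertices \<Delta>" using edge_vertices[OF e] by auto
lemma cg: "bbgen \<Delta> e \<in> carrier G" by (rule bbgen_carrier[OF e])

lemma iv_a: "thi (bbgen \<Delta> e) = tp \<Delta> T (-1) q (fst e) \<otimes> tp \<Delta> T (-1) (snd e) q"
proof (rule thi_eq)
  show "tp \<Delta> T (-1) q (fst e) \<otimes> tp \<Delta> T (-1) (snd e) q \<in> carrier G" using hu hv qv by simp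
  have "\<theta> (tp \<Delta> T (-1) q (fst e) \<otimes> tp \<Delta> T (-1) (snd e) q) = tp \<Delta> T 1 (fst e) q \<otimes> tp \<Delta> T 1 q (snd e)"
    using hu hv qv by (simp add: thPm thQm)
  also have "\<dots> = bbgen \<Delta> e"
    unfolding A1[OF e] tp_inv[OF qv hv, of 1] using hu hv qv cg by (simp add: m_assoc)
  finally show "\<theta> (tp \<Delta> T (-1) q (fst e) \<otimes> tp \<Delta> T (-1) (snd e) q) = bbgen \<Delta> e" .
qed

lemma v_a: "thi (bbgen \<Delta> e [^] (n::int)) = tp \<Delta> T (-1) q (fst e) \<otimes> bbgen \<Delta> e [^] n \<otimes> tp \<Delta> T (-1) (fst e) q"
proof (rule thi_eq)
  show "tp \<Delta> T (-1) q (fst e) \<otimes> bbgen \<Delta> e [^] n \<otimes> tp \<Delta> T (-1) (fst e) q \<in> carrier G"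
    using hu hv qv cg by simp
  have "\<theta> (tp \<Delta> T (-1) q (fst e) \<otimes> bbgen \<Delta> e [^] n \<otimes> tp \<Delta> T (-1) (fst e) q) =
     tp \<Delta> T 1 (fst e) q \<otimes> (tp \<Delta> T 1 q (fst e) \<otimes> bbgen \<Delta> e [^] n \<otimes> inv (tp \<Delta> T 1 q (fst e))) \<otimes> tp \<Delta> T 1 q (fst e)"
    using hu hv qv cg by (simp add: thPm thQm A3[OF e])
  also have "\<dots> = bbgen \<Delta> e [^] n"
    unfolding tp_inv[OF qv hu, of 1] using hu hv qv cg by (simp add: m_assoc)
  finally show "\<theta> (tp \<Delta> T (-1) q (fst e) \<otimes> bbgen \<Delta> e [^] n \<otimes> tp \<Delta> T (-1) (fst e) q) = bbgen \<Delta> e [^] n" .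
qed

lemma v_b: "thi (bbgen \<Delta> e [^] (n::int)) = tp \<Delta> T (-1) q (fst e) \<otimes> bbgen \<Delta> e [^] (n - 1) \<otimes> tp \<Delta> T (-1) (snd e) q"
proof (rule thi_eq)
  show "tp \<Delta> T (-1) q (fst e) \<otimes> bbgen \<Delta> e [^] (n - 1) \<otimes> tp \<Delta> T (-1) (snd e) q \<in> carrier G"
    using hu hv qv cg by simp
  have "\<theta> (tp \<Delta> T (-1) q (fst e) \<otimes> bbgen \<Delta> e [^] (n - 1) \<otimes> tp \<Delta> T (-1) (snd e) q) =
     tp \<Delta> T 1 (fst e) q \<otimes> (tp \<Delta> T 1 q (fst e) \<otimes> bbgen \<Delta> e [^] (n - 1 + 1) \<otimes> tp \<Delta> T 1 (snd e) q) \<otimes> tp \<Delta> T 1 q (snd e)"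
    using hu hv qv cg by (simp add: thPm thQm A4[OF e])
  also have "\<dots> = bbgen \<Delta> e [^] n"
    unfolding tp_inv[OF qv hu, of 1] tp_inv[OF qv hv, of 1] using hu hv qv cg by (simp add: m_assoc)
  finally show "\<theta> (tp \<Delta> T (-1) q (fst e) \<otimes> bbgen \<Delta> e [^] (n - 1) \<otimes> tp \<Delta> T (-1) (snd e) q) = bbgen \<Delta> e [^] n" .
qed

lemma i2: "\<theta> (bbgen \<Delta> e) = tp \<Delta> T 1 q (fst e) \<otimes> bbgen \<Delta> e [^] (2::int) \<otimes> tp \<Delta> T 1 (snd e) q"
  using A4[OF e, of 1] cg by simp
lemma i3: "\<theta> (bbgen \<Delta> e) = tp \<Delta> T 1 q (fst e) \<otimes> bbgen \<Delta> e [^] (2::int) \<otimes> inv (tp \<Delta> T 1 q (snd e))"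
  using i2 tp_inv[OF qv hv, of 1] by simp
lemma ii1: "\<theta> (bbgen \<Delta> e [^] (n::int)) = tp \<Delta> T 1 q (fst e) \<otimes> bbgen \<Delta> e [^] n \<otimes> tp \<Delta> T 1 (fst e) q"
  using A3[OF e, of n] tp_inv[OF qv hu, of 1] by simp
lemma ii3: "\<theta> (bbgen \<Delta> e [^] (n::int)) = tp \<Delta> T 1 q (fst e) \<otimes> bbgen \<Delta> e [^] (n + 1) \<otimes> inv (tp \<Delta> T 1 q (snd e))"
  using A4[OF e, of n] tp_inv[OF qv hv, of 1] by simp
lemma iv2: "thi (bbgen \<Delta> e) = tp \<Delta> T (-1) q (fst e) \<otimes> bbgen \<Delta> e \<otimes> tp \<Delta> T (-1) (fst e) q"
  using v_a[of 1] cg by simp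
lemma iv3: "thi (bbgen \<Delta> e) = tp \<Delta> T (-1) q (fst e) \<otimes> bbgen \<Delta> e \<otimes> inv (tp \<Delta> T (-1) q (fst e))"
  using iv2 tp_inv[OF qv hu, of "-1"] by simp
lemma v3: "thi (bbgen \<Delta> e [^] (n::int)) = tp \<Delta> T (-1) q (fst e) \<otimes> bbgen \<Delta> e [^] (n - 1) \<otimes> inv (tp \<Delta> T (-1) q (snd e))"
  using v_b[of n] tp_inv[OF qv hv, of "-1"] by simp

lemma vii_pos: "(\<theta> ^^ m) (bbgen \<Delta> e) =
   tp \<Delta> T (int m) q (fst e) \<otimes> bbgen \<Delta> e [^] (int m + 1) \<otimes> tp \<Delta> T (int m) (snd e) q"
proof (induction m)
  case 0 then show ?case using cg by simp
next
  case (Suc m)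
  have "(\<theta> ^^ Suc m) (bbgen \<Delta> e) = \<theta> ((\<theta> ^^ m) (bbgen \<Delta> e))" by simp
  also have "\<dots> = \<theta> (tp \<Delta> T (int m) q (fst e)) \<otimes> \<theta> (bbgen \<Delta> e [^] (int m + 1)) \<otimes> \<theta> (tp \<Delta> T (int m) (snd e) q)"
    unfolding Suc using hu hv qv cg by simp
  also have "\<dots> = (tp \<Delta> T 1 q q \<otimes> tp \<Delta> T (int m + 1) q (fst e) \<otimes> tp \<Delta> T 1 (fst e) q) \<otimes>
      (tp \<Delta> T 1 q (fst e) \<otimes> bbgen \<Delta> e [^] (int m + 1 + 1) \<otimes> tp \<Delta> T 1 (snd e) q) \<otimes>
      (tp \<Delta> T 1 q (snd e) \<otimes> tp \<Delta> T (int m + 1) (snd e) q \<otimes> tp \<Delta> T 1 q q)"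
    unfolding th_tp[OF qv hu] th_tp[OF hv qv] A4[OF e] ..
  also have "\<dots> = tp \<Delta> T (int m + 1) q (fst e) \<otimes> bbgen \<Delta> e [^] (int m + 1 + 1) \<otimes> tp \<Delta> T (int m + 1) (snd e) q"
    unfolding tp_inv[OF qv hu, of 1] tp_inv[OF qv hv, of 1] using hu hv qv cg by (simp add: m_assoc)
  also have "int m + 1 + 1 = int (Suc m) + 1" by simp
  also have "int m + 1 = int (Suc m)" by simp
  finally show ?case .
qed

lemma vii_neg: "(thi ^^ m) (bbgen \<Delta> e) =
   tp \<Delta> T (- int m) q (fst e) \<otimes> bbgen \<Delta> e [^] (1 - int m) \<otimes> tp \<Delta> T (- int m) (snd e) q"
proof (induction m)
  case 0 then show ?case using cg by simp
next
  case (Suc m)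
  have "(thi ^^ Suc m) (bbgen \<Delta> e) = thi ((thi ^^ m) (bbgen \<Delta> e))" by simp
  also have "\<dots> = thi (tp \<Delta> T (- int m) q (fst e)) \<otimes> thi (bbgen \<Delta> e [^] (1 - int m)) \<otimes> thi (tp \<Delta> T (- int m) (snd e) q)"
    unfolding Suc using hu hv qv cg by simp
  also have "\<dots> = (tp \<Delta> T (-1) q q \<otimes> tp \<Delta> T (- int m - 1) q (fst e) \<otimes> tp \<Delta> T (-1) (fst e) q) \<otimes>
      (tp \<Delta> T (-1) q (fst e) \<otimes> bbgen \<Delta> e [^] (1 - int m - 1) \<otimes> tp \<Delta> T (-1) (snd e) q) \<otimes>
      (tp \<Delta> T (-1) q (snd e) \<otimes> tp \<Delta> T (- int m - 1) (snd e) q \<otimes> tp \<Delta> T (-1) q q)"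
    unfolding thi_tp[OF qv hu] thi_tp[OF hv qv] v_b ..
  also have "\<dots> = tp \<Delta> T (- int m - 1) q (fst e) \<otimes> bbgen \<Delta> e [^] (1 - int m - 1) \<otimes> tp \<Delta> T (- int m - 1) (snd e) q"
    unfolding tp_inv[OF qv hu, of "-1"] tp_inv[OF qv hv, of "-1"] using hu hv qv cg by (simp add: m_assoc)
  also have "- int m - 1 = - int (Suc m)" by simp
  also have "1 - int m - 1 = 1 - int (Suc m)" by simp
  finally show ?case .
qed

lemma vii: "aut_pow G \<theta> k (bbgen \<Delta> e) =
   tp \<Delta> T k q (fst e) \<otimes> bbgen \<Delta> e [^] (k + 1) \<otimes> tp \<Delta> T k (snd e) q"
proof (cases "0 \<le> k")
  case True
  then have k: "k = int (nat k)" by simp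
  show ?thesis using True vii_pos[of "nat k"] unfolding aut_pow_def by (simp add: k[symmetric])
next
  case False
  then have k: "k = - int (nat (- k))" by simp
  have k1: "1 - int (nat (- k)) = k + 1" using False by simp
  show ?thesis using False vii_neg[of "nat (- k)"] unfolding aut_pow_def k1 by (simp add: k[symmetric])
qed

end

lemma cpath_props: assumes "cpath \<Delta> es"
  shows "walk (one_skel \<Delta>) (fst (hd es)) (snd (last es)) es \<and> fst (hd es) \<in> vertices \<Delta>"
proof -
  have ne: "es \<noteq> []" and E: "set es \<subseteq> edges \<Delta>"
    and c: "\<forall>i. Suc i < length es \<longrightarrow> snd (es ! i) = fst (es ! Suc i)"
    using assms by (auto simp: cpath_def)
  have "hd es \<in> edges \<Delta>" using ne E by auto
  then show ?thesis using cpath_walk[OF E ne c] edge_vertices by blast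
qed


lemma c1: "cpath \<Delta> es \<Longrightarrow> \<theta> (path_pow \<Delta> n es) =
   tp \<Delta> T 1 q (fst (hd es)) \<otimes> path_pow \<Delta> (n + 1) es \<otimes> tp \<Delta> T 1 (snd (last es)) q"
  using cpath_props th_walk by blast

lemma c2: "cpath \<Delta> es \<Longrightarrow> thi (path_pow \<Delta> n es) =
   tp \<Delta> T (-1) q (fst (hd es)) \<otimes> path_pow \<Delta> (n - 1) es \<otimes> tp \<Delta> T (-1) (snd (last es)) q"
  using cpath_props thi_walk by blast

lemma main:
 "(\<forall>e\<in>edges \<Delta>. \<forall>n::int.
     (\<theta> (bbgen \<Delta> e) = tp \<Delta> T 1 q (fst e) \<otimes> bbgen \<Delta> e
          \<otimes> inv (tp \<Delta> T 1 q (fst e)) \<and>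
      \<theta> (bbgen \<Delta> e) = tp \<Delta> T 1 q (fst e) \<otimes> (bbgen \<Delta> e [^] (2::int))
          \<otimes> tp \<Delta> T 1 (snd e) q \<and>
      \<theta> (bbgen \<Delta> e) = tp \<Delta> T 1 q (fst e) \<otimes> (bbgen \<Delta> e [^] (2::int))
          \<otimes> inv (tp \<Delta> T 1 q (snd e))) \<and>
     (\<theta> (bbgen \<Delta> e [^] n) = tp \<Delta> T 1 q (fst e) \<otimes> (bbgen \<Delta> e [^] n)
          \<otimes> tp \<Delta> T 1 (fst e) q \<and>
      \<theta> (bbgen \<Delta> e [^] n) = tp \<Delta> T 1 q (fst e) \<otimes> (bbgen \<Delta> e [^] (n + 1))
          \<otimes> tp \<Delta> T 1 (snd e) q \<and>
      \<theta> (bbgen \<Delta> e [^] n) = tp \<Delta> T 1 q (fst e) \<otimes> (bbgen \<Delta> e [^] (n + 1))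
          \<otimes> inv (tp \<Delta> T 1 q (snd e))) \<and>
     (inv_into (carrier G) \<theta> (bbgen \<Delta> e) =
          tp \<Delta> T (-1) q (fst e) \<otimes> tp \<Delta> T (-1) (snd e) q \<and>
      inv_into (carrier G) \<theta> (bbgen \<Delta> e) =
          tp \<Delta> T (-1) q (fst e) \<otimes> bbgen \<Delta> e \<otimes> tp \<Delta> T (-1) (fst e) q \<and>
      inv_into (carrier G) \<theta> (bbgen \<Delta> e) =
          tp \<Delta> T (-1) q (fst e) \<otimes> bbgen \<Delta> e
          \<otimes> inv (tp \<Delta> T (-1) q (fst e))) \<and>
     (inv_into (carrier G) \<theta> (bbgen \<Delta> e [^] n) =
          tp \<Delta> T (-1) q (fst e) \<otimes> (bbgen \<Delta> e [^] n)
          \<otimes> tp \<Delta> T (-1) (fst e) q \<and>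
      inv_into (carrier G) \<theta> (bbgen \<Delta> e [^] n) =
          tp \<Delta> T (-1) q (fst e) \<otimes> (bbgen \<Delta> e [^] (n - 1))
          \<otimes> tp \<Delta> T (-1) (snd e) q \<and>
      inv_into (carrier G) \<theta> (bbgen \<Delta> e [^] n) =
          tp \<Delta> T (-1) q (fst e) \<otimes> (bbgen \<Delta> e [^] (n - 1))
          \<otimes> inv (tp \<Delta> T (-1) q (snd e))) \<and>
     (\<forall>k::int. aut_pow G \<theta> k (bbgen \<Delta> e) =
          tp \<Delta> T k q (fst e) \<otimes> (bbgen \<Delta> e [^] (k + 1))
          \<otimes> tp \<Delta> T k (snd e) q)) \<and>
   (\<forall>es. \<forall>n::int. cpath \<Delta> es \<longrightarrow>
      \<theta> (path_pow \<Delta> n es) =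
          tp \<Delta> T 1 q (fst (hd es)) \<otimes> path_pow \<Delta> (n + 1) es
          \<otimes> tp \<Delta> T 1 (snd (last es)) q \<and>
      inv_into (carrier G) \<theta> (path_pow \<Delta> n es) =
          tp \<Delta> T (-1) q (fst (hd es)) \<otimes> path_pow \<Delta> (n - 1) es
          \<otimes> tp \<Delta> T (-1) (snd (last es)) q)"
  by (intro conjI ballI allI impI;
      ((rule A2 i2 i3 ii1 A4 ii3 iv_a iv2 iv3 v_a v_b v3 vii c1 c2); assumption))

end

lemma BB_group_group: "group (BB_group \<Delta>)"
  unfolding BB_group_def by (rule group_pg)


theorem lemma4p1:
  fixes \<Delta> T :: "'v set set" and q :: 'v and \<theta> :: "('v \<times> 'v) word set \<Rightarrow> ('v \<times> 'v) word set"
  assumes "simplicial_complex \<Delta>" and "flag \<Delta>" and "simply_connected \<Delta>"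
    and "q \<in> vertices \<Delta>" and "spanning_tree \<Delta> T"
    and "\<theta> \<in> iso (BB_group \<Delta>) (BB_group \<Delta>)"
    and "\<forall>e\<in>edges \<Delta>. \<theta> (bbgen \<Delta> e) =
           tp \<Delta> T 1 q (fst e) \<otimes>\<^bsub>BB_group \<Delta>\<^esub> bbgen \<Delta> e \<otimes>\<^bsub>BB_group \<Delta>\<^esub> tp \<Delta> T 1 (fst e) q"
  shows
   "(\<forall>e\<in>edges \<Delta>. \<forall>n::int.
     (\<theta> (bbgen \<Delta> e) = tp \<Delta> T 1 q (fst e) \<otimes>\<^bsub>BB_group \<Delta>\<^esub> bbgen \<Delta> e
          \<otimes>\<^bsub>BB_group \<Delta>\<^esub> inv\<^bsub>BB_group \<Delta>\<^esub> (tp \<Delta> T 1 q (fst e)) \<and>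
      \<theta> (bbgen \<Delta> e) = tp \<Delta> T 1 q (fst e) \<otimes>\<^bsub>BB_group \<Delta>\<^esub> (bbgen \<Delta> e [^]\<^bsub>BB_group \<Delta>\<^esub> (2::int))
          \<otimes>\<^bsub>BB_group \<Delta>\<^esub> tp \<Delta> T 1 (snd e) q \<and>
      \<theta> (bbgen \<Delta> e) = tp \<Delta> T 1 q (fst e) \<otimes>\<^bsub>BB_group \<Delta>\<^esub> (bbgen \<Delta> e [^]\<^bsub>BB_group \<Delta>\<^esub> (2::int))
          \<otimes>\<^bsub>BB_group \<Delta>\<^esub> inv\<^bsub>BB_group \<Delta>\<^esub> (tp \<Delta> T 1 q (snd e))) \<and>
     (\<theta> (bbgen \<Delta> e [^]\<^bsub>BB_group \<Delta>\<^esub> n) = tp \<Delta> T 1 q (fst e) \<otimes>\<^bsub>BB_group \<Delta>\<^esub> (bbgen \<Delta> e [^]\<^bsub>BB_group \<Delta>\<^esub> n)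
          \<otimes>\<^bsub>BB_group \<Delta>\<^esub> tp \<Delta> T 1 (fst e) q \<and>
      \<theta> (bbgen \<Delta> e [^]\<^bsub>BB_group \<Delta>\<^esub> n) = tp \<Delta> T 1 q (fst e) \<otimes>\<^bsub>BB_group \<Delta>\<^esub> (bbgen \<Delta> e [^]\<^bsub>BB_group \<Delta>\<^esub> (n + 1))
          \<otimes>\<^bsub>BB_group \<Delta>\<^esub> tp \<Delta> T 1 (snd e) q \<and>
      \<theta> (bbgen \<Delta> e [^]\<^bsub>BB_group \<Delta>\<^esub> n) = tp \<Delta> T 1 q (fst e) \<otimes>\<^bsub>BB_group \<Delta>\<^esub> (bbgen \<Delta> e [^]\<^bsub>BB_group \<Delta>\<^esub> (n + 1))
          \<otimes>\<^bsub>BB_group \<Delta>\<^esub> inv\<^bsub>BB_group \<Delta>\<^esub> (tp \<Delta> T 1 q (snd e))) \<and>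
     (inv_into (carrier (BB_group \<Delta>)) \<theta> (bbgen \<Delta> e) =
          tp \<Delta> T (-1) q (fst e) \<otimes>\<^bsub>BB_group \<Delta>\<^esub> tp \<Delta> T (-1) (snd e) q \<and>
      inv_into (carrier (BB_group \<Delta>)) \<theta> (bbgen \<Delta> e) =
          tp \<Delta> T (-1) q (fst e) \<otimes>\<^bsub>BB_group \<Delta>\<^esub> bbgen \<Delta> e \<otimes>\<^bsub>BB_group \<Delta>\<^esub> tp \<Delta> T (-1) (fst e) q \<and>
      inv_into (carrier (BB_group \<Delta>)) \<theta> (bbgen \<Delta> e) =
          tp \<Delta> T (-1) q (fst e) \<otimes>\<^bsub>BB_group \<Delta>\<^esub> bbgen \<Delta> e
          \<otimes>\<^bsub>BB_group \<Delta>\<^esub> inv\<^bsub>BB_group \<Delta>\<^esub> (tp \<Delta> T (-1) q (fst e))) \<and>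
     (inv_into (carrier (BB_group \<Delta>)) \<theta> (bbgen \<Delta> e [^]\<^bsub>BB_group \<Delta>\<^esub> n) =
          tp \<Delta> T (-1) q (fst e) \<otimes>\<^bsub>BB_group \<Delta>\<^esub> (bbgen \<Delta> e [^]\<^bsub>BB_group \<Delta>\<^esub> n)
          \<otimes>\<^bsub>BB_group \<Delta>\<^esub> tp \<Delta> T (-1) (fst e) q \<and>
      inv_into (carrier (BB_group \<Delta>)) \<theta> (bbgen \<Delta> e [^]\<^bsub>BB_group \<Delta>\<^esub> n) =
          tp \<Delta> T (-1) q (fst e) \<otimes>\<^bsub>BB_group \<Delta>\<^esub> (bbgen \<Delta> e [^]\<^bsub>BB_group \<Delta>\<^esub> (n - 1))
          \<otimes>\<^bsub>BB_group \<Delta>\<^esub> tp \<Delta> T (-1) (snd e) q \<and>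
      inv_into (carrier (BB_group \<Delta>)) \<theta> (bbgen \<Delta> e [^]\<^bsub>BB_group \<Delta>\<^esub> n) =
          tp \<Delta> T (-1) q (fst e) \<otimes>\<^bsub>BB_group \<Delta>\<^esub> (bbgen \<Delta> e [^]\<^bsub>BB_group \<Delta>\<^esub> (n - 1))
          \<otimes>\<^bsub>BB_group \<Delta>\<^esub> inv\<^bsub>BB_group \<Delta>\<^esub> (tp \<Delta> T (-1) q (snd e))) \<and>
     (\<forall>k::int. aut_pow (BB_group \<Delta>) \<theta> k (bbgen \<Delta> e) =
          tp \<Delta> T k q (fst e) \<otimes>\<^bsub>BB_group \<Delta>\<^esub> (bbgen \<Delta> e [^]\<^bsub>BB_group \<Delta>\<^esub> (k + 1))
          \<otimes>\<^bsub>BB_group \<Delta>\<^esub> tp \<Delta> T k (snd e) q)) \<and>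
   (\<forall>es. \<forall>n::int. cpath \<Delta> es \<longrightarrow>
      \<theta> (path_pow \<Delta> n es) =
          tp \<Delta> T 1 q (fst (hd es)) \<otimes>\<^bsub>BB_group \<Delta>\<^esub> path_pow \<Delta> (n + 1) es
          \<otimes>\<^bsub>BB_group \<Delta>\<^esub> tp \<Delta> T 1 (snd (last es)) q \<and>
      inv_into (carrier (BB_group \<Delta>)) \<theta> (path_pow \<Delta> n es) =
          tp \<Delta> T (-1) q (fst (hd es)) \<otimes>\<^bsub>BB_group \<Delta>\<^esub> path_pow \<Delta> (n - 1) es
          \<otimes>\<^bsub>BB_group \<Delta>\<^esub> tp \<Delta> T (-1) (snd (last es)) q)"
  proof -
  have B: "bbs (BB_group \<Delta>) \<Delta> T q \<theta>"
    unfolding bbs_def bbs_axioms_def using BB_group_group[of \<Delta>] assms(1,3,4,5,6,7) by simp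
  show ?thesis by (rule bbs.main[OF B])
qed

end
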